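(* Let $\nu: K_1 \to K_2$ be an isomorphism and $\bar{\mathcal{E}}$ be the central extension $1\to H_1\times H_2\to \bar G\xrightarrow{\beta} K_1\to 1$. Then $\ker \Delta = \tilde{M}(\nu)^{-1}(\ker \Delta_2)\cap \ker \Delta_1$, where $\Delta: \tilde{M}(K_1)\to {^M[\bar{G},\bar{G}]}$.
   Context: For a multiplicative Lie algebra $G$, ${^M[G,G]}$ denotes the ideal $(G\star G)[G,G]$, and $\mathcal{Z}(G)=LZ(G)\cap Z(G)$ (intersection of the Lie center and the group center). Let $\mathcal{E}_i \equiv 1\to H_i\xrightarrow{i} G_i\xrightarrow{\beta_i} K_i\to 1$, $i=1,2$, be two central extensions of multiplicative Lie algebras (so $H_i\subseteq\mathcal{Z}(G_i)$), and $\nu:K_1\to K_2$ a homomorphism. Let $\bar G=G_1\times_{K_2}G_2=\{(g_1,g_2): g_i\in G_i,\ \nu(\beta_1(g_1))=\beta_2(g_2)\}$, a subalgebra of $G_1\times G_2$, and $\beta(g_1,g_2)=\beta_1(g_1)$; then $\bar{\mathcal{E}}\equiv 1\to H_1\times H_2\to\bar G\xrightarrow{\beta}K_1\to 1$ is a central extension. $\tilde M(K)=\frac{{^M[F,F]}\cap R}{{^M[R,F]}}$ is the Schur multiplier (for a free presentation $1\to R\to F\to K\to1$), a covariant functor, so $\nu$ induces $\tilde M(\nu)$. For any central extension $1\to H\to G\xrightarrow{\beta}K\to1$ there is a homomorphism $\tilde M(K)\to{^M[G,G]}$ making $1\to\ker\to\tilde M(K)\to{^M[G,G]}\xrightarrow{\beta|}{^M[K,K]}\to1$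 exact; $\Delta_i:\tilde M(K_i)\to{^M[G_i,G_i]}$ and $\Delta:\tilde M(K_1)\to{^M[\bar G,\bar G]}$ denote these maps for $\mathcal{E}_i$ and $\bar{\mathcal{E}}$ respectively. *)

theory Defs
  imports "HOL-Algebra.Algebra"
begin

record 'a mla = "'a monoid" + star :: "'a \<Rightarrow> 'a \<Rightarrow> 'a"

definition mconj :: "('a, 'b) mla_scheme \<Rightarrow> 'a \<Rightarrow> 'a \<Rightarrow> 'a" where
  "mconj G y x = y \<otimes>\<^bsub>G\<^esub> x \<otimes>\<^bsub>G\<^esub> inv\<^bsub>G\<^esub> y"

definition mla :: "('a, 'b) mla_scheme \<Rightarrow> bool" where
  "mla G \<longleftrightarrow> group G \<and>
     (\<forall>x\<in>carrier G. \<forall>y\<in>carrier G. star G x y \<in> carrier G) \<and>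
     (\<forall>x\<in>carrier G. star G x x = \<one>\<^bsub>G\<^esub>) \<and>
     (\<forall>x\<in>carrier G. \<forall>y\<in>carrier G. \<forall>z\<in>carrier G.
        star G x (y \<otimes>\<^bsub>G\<^esub> z) = star G x y \<otimes>\<^bsub>G\<^esub> mconj G y (star G x z)) \<and>
     (\<forall>x\<in>carrier G. \<forall>y\<in>carrier G. \<forall>z\<in>carrier G.
        star G (x \<otimes>\<^bsub>G\<^esub> y) z = mconj G x (star G y z) \<otimes>\<^bsub>G\<^esub> star G x z) \<and>
     (\<forall>x\<in>carrier G. \<forall>y\<in>carrier G. \<forall>z\<in>carrier G.
        star G (star G x y) (mconj G y z) \<otimes>\<^bsub>G\<^esub> star G (star G y z) (mconj G z x)
          \<otimes>\<^bsub>G\<^esub> star G (star G z x) (mconj G x y) = \<one>\<^bsub>G\<^esub>) \<and>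
     (\<forall>x\<in>carrier G. \<forall>y\<in>carrier G. \<forall>z\<in>carrier G.
        mconj G z (star G x y) = star G (mconj G z x) (mconj G z y))"

definition mla_hom :: "('a, 'c) mla_scheme \<Rightarrow> ('b, 'd) mla_scheme \<Rightarrow> ('a \<Rightarrow> 'b) \<Rightarrow> bool" where
  "mla_hom G H h \<longleftrightarrow> h \<in> hom G H \<and>
     (\<forall>x\<in>carrier G. \<forall>y\<in>carrier G. h (star G x y) = star H (h x) (h y))"

definition mcomm :: "('a, 'b) mla_scheme \<Rightarrow> 'a set \<Rightarrow> 'a set \<Rightarrow> 'a set" where
  "mcomm G A B = generate G
     ({star G a b | a b. a \<in> A \<and> b \<in> B} \<union>
      {a \<otimes>\<^bsub>G\<^esub> b \<otimes>\<^bsub>G\<^esub> inv\<^bsub>G\<^esub> a \<otimes>\<^bsub>G\<^esub> inv\<^bsub>G\<^esub> b | a b. a \<in> A \<and> b \<in> B})"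

definition lie_center :: "('a, 'b) mla_scheme \<Rightarrow> 'a set" where
  "lie_center G = {x \<in> carrier G. \<forall>g\<in>carrier G. star G x g = \<one>\<^bsub>G\<^esub>}"

definition group_center :: "('a, 'b) mla_scheme \<Rightarrow> 'a set" where
  "group_center G = {x \<in> carrier G. \<forall>g\<in>carrier G. x \<otimes>\<^bsub>G\<^esub> g = g \<otimes>\<^bsub>G\<^esub> x}"

definition mla_center :: "('a, 'b) mla_scheme \<Rightarrow> 'a set" where
  "mla_center G = lie_center G \<inter> group_center G"

definition central_ext :: "('a, 'c) mla_scheme \<Rightarrow> ('b, 'd) mla_scheme \<Rightarrow> ('a \<Rightarrow> 'b) \<Rightarrow> bool" where
  "central_ext G K \<beta> \<longleftrightarrow> mla G \<and> mla K \<and> mla_hom G K \<beta> \<and> \<beta> ` carrier G = carrier K \<and>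
     kernel G K \<beta> \<subseteq> mla_center G"

text \<open>Free multiplicative Lie algebra on \<open>S\<close>; the universal property is stated with
  respect to all multiplicative Lie algebras whose underlying type is \<open>'t\<close>.\<close>
definition free_mla :: "('a, 'c) mla_scheme \<Rightarrow> 'a set \<Rightarrow> 't itself \<Rightarrow> bool" where
  "free_mla F S (T :: 't itself) \<longleftrightarrow> mla F \<and> S \<subseteq> carrier F \<and>
     (\<forall>(G :: 't mla) f. mla G \<longrightarrow> f ` S \<subseteq> carrier G \<longrightarrow>
        (\<exists>h. mla_hom F G h \<and> (\<forall>x\<in>S. h x = f x)) \<and>
        (\<forall>h h'. mla_hom F G h \<longrightarrow> mla_hom F G h' \<longrightarrow> (\<forall>x\<in>S. h x = h' x) \<longrightarrow>
           (\<forall>x\<in>carrier F. h x = h' x)))"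

definition schur_num :: "('a, 'c) mla_scheme \<Rightarrow> 'a set \<Rightarrow> 'a set" where
  "schur_num F R = mcomm F (carrier F) (carrier F) \<inter> R"

definition schur_den :: "('a, 'c) mla_scheme \<Rightarrow> 'a set \<Rightarrow> 'a set" where
  "schur_den F R = mcomm F R (carrier F)"

text \<open>Elements of the Schur multiplier for the presentation \<open>\<pi> : F \<to> K\<close>
  (with \<open>R = ker \<pi>\<close>) are the cosets of \<open>^M[R,F]\<close> in \<open>^M[F,F] \<inter> R\<close>.\<close>
definition schur :: "('a, 'c) mla_scheme \<Rightarrow> ('b, 'd) mla_scheme \<Rightarrow> ('a \<Rightarrow> 'b) \<Rightarrow> 'a set set" where
  "schur F K \<pi> = {schur_den F (kernel F K \<pi>) #>\<^bsub>F\<^esub> x | x. x \<in> schur_num F (kernel F K \<pi>)}"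

text \<open>A lift \<open>\<theta> : F \<to> G\<close> of \<open>\<pi>\<close> along \<open>\<beta>\<close> (exists since \<open>F\<close> is free).\<close>
definition mla_lift :: "('a, 'c) mla_scheme \<Rightarrow> ('a \<Rightarrow> 'b) \<Rightarrow> ('g, 'e) mla_scheme \<Rightarrow> ('g \<Rightarrow> 'b) \<Rightarrow> 'a \<Rightarrow> 'g" where
  "mla_lift F \<pi> G \<beta> = (SOME \<theta>. mla_hom F G \<theta> \<and> (\<forall>x\<in>carrier F. \<beta> (\<theta> x) = \<pi> x))"

text \<open>The map \<open>\<Delta> : M(K) \<to> ^M[G,G]\<close> associated with the central extension
  \<open>\<beta> : G \<to> K\<close>, induced by a lift of \<open>\<pi>\<close>.\<close>
definition schur_delta :: "('a, 'c) mla_scheme \<Rightarrow> ('a \<Rightarrow> 'b) \<Rightarrow> ('g, 'e) mla_scheme \<Rightarrow> ('g \<Rightarrow> 'b) \<Rightarrow> 'a set \<Rightarrow> 'g" where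
  "schur_delta F \<pi> G \<beta> C = the_elem (mla_lift F \<pi> G \<beta> ` C)"

definition delta_kernel :: "('a, 'c) mla_scheme \<Rightarrow> ('b, 'd) mla_scheme \<Rightarrow> ('a \<Rightarrow> 'b) \<Rightarrow>
     ('g, 'e) mla_scheme \<Rightarrow> ('g \<Rightarrow> 'b) \<Rightarrow> 'a set set" where
  "delta_kernel F K \<pi> G \<beta> = {C \<in> schur F K \<pi>. schur_delta F \<pi> G \<beta> C = \<one>\<^bsub>G\<^esub>}"

text \<open>The induced map \<open>M(\<nu>) : M(K\<^sub>1) \<to> M(K\<^sub>2)\<close> for presentations
  \<open>\<pi>\<^sub>1 : F\<^sub>1 \<to> K\<^sub>1\<close>, \<open>\<pi>\<^sub>2 : F\<^sub>2 \<to> K\<^sub>2\<close>, induced by a lift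
  \<open>\<mu> : F\<^sub>1 \<to> F\<^sub>2\<close> of \<open>\<nu> \<circ> \<pi>\<^sub>1\<close>.\<close>
definition schur_map :: "('a, 'c) mla_scheme \<Rightarrow> ('a \<Rightarrow> 'k) \<Rightarrow> ('f, 'e) mla_scheme \<Rightarrow>
     ('l, 'd) mla_scheme \<Rightarrow> ('f \<Rightarrow> 'l) \<Rightarrow> ('k \<Rightarrow> 'l) \<Rightarrow> 'a set \<Rightarrow> 'f set" where
  "schur_map F1 \<pi>1 F2 K2 \<pi>2 \<nu> C =
     the_elem ((\<lambda>x. schur_den F2 (kernel F2 K2 \<pi>2) #>\<^bsub>F2\<^esub> mla_lift F1 (\<nu> \<circ> \<pi>1) F2 \<pi>2 x) ` C)"

definition fibre_prod :: "('a, 'c) mla_scheme \<Rightarrow> ('b, 'd) mla_scheme \<Rightarrow> ('a \<Rightarrow> 'k) \<Rightarrow>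
     ('b \<Rightarrow> 'l) \<Rightarrow> ('k \<Rightarrow> 'l) \<Rightarrow> ('a \<times> 'b) mla" where
  "fibre_prod G1 G2 \<beta>1 \<beta>2 \<nu> =
     \<lparr> carrier = {(g1, g2). g1 \<in> carrier G1 \<and> g2 \<in> carrier G2 \<and> \<nu> (\<beta>1 g1) = \<beta>2 g2},
       monoid.mult = (\<lambda>(x1, x2) (y1, y2). (x1 \<otimes>\<^bsub>G1\<^esub> y1, x2 \<otimes>\<^bsub>G2\<^esub> y2)),
       monoid.one = (\<one>\<^bsub>G1\<^esub>, \<one>\<^bsub>G2\<^esub>),
       star = (\<lambda>(x1, x2) (y1, y2). (star G1 x1 y1, star G2 x2 y2)) \<rparr>"

end

theory Submission
  imports Defs
begin

lemma mla_group: "mla G \<Longrightarrow> group G" by (simp add: mla_def)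

lemma mla_star_closed: "mla G \<Longrightarrow> x \<in> carrier G \<Longrightarrow> y \<in> carrier G \<Longrightarrow> star G x y \<in> carrier G"
  by (simp add: mla_def)

lemma mla_star_self: "mla G \<Longrightarrow> x \<in> carrier G \<Longrightarrow> star G x x = \<one>\<^bsub>G\<^esub>"
  by (simp add: mla_def)

lemma mla_star_right: "mla G \<Longrightarrow> x \<in> carrier G \<Longrightarrow> y \<in> carrier G \<Longrightarrow> z \<in> carrier G \<Longrightarrow>
   star G x (y \<otimes>\<^bsub>G\<^esub> z) = star G x y \<otimes>\<^bsub>G\<^esub> mconj G y (star G x z)"
  by (simp add: mla_def)

lemma mla_star_left: "mla G \<Longrightarrow> x \<in> carrier G \<Longrightarrow> y \<in> carrier G \<Longrightarrow> z \<in> carrier G \<Longrightarrow>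
   star G (x \<otimes>\<^bsub>G\<^esub> y) z = mconj G x (star G y z) \<otimes>\<^bsub>G\<^esub> star G x z"
  by (simp add: mla_def)


lemma mla_jacobi: "mla G \<Longrightarrow> x \<in> carrier G \<Longrightarrow> y \<in> carrier G \<Longrightarrow> z \<in> carrier G \<Longrightarrow>
   star G (star G x y) (mconj G y z) \<otimes>\<^bsub>G\<^esub> star G (star G y z) (mconj G z x)
          \<otimes>\<^bsub>G\<^esub> star G (star G z x) (mconj G x y) = \<one>\<^bsub>G\<^esub>"
  unfolding mla_def by blast

lemma mla_conj_star: "mla G \<Longrightarrow> x \<in> carrier G \<Longrightarrow> y \<in> carrier G \<Longrightarrow> z \<in> carrier G \<Longrightarrow>
   mconj G z (star G x y) = star G (mconj G z x) (mconj G z y)"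
  unfolding mla_def by blast

lemma mconj_closed:
  fixes G (structure)
  shows "group G \<Longrightarrow> y \<in> carrier G \<Longrightarrow> x \<in> carrier G \<Longrightarrow> mconj G y x \<in> carrier G"
  by (simp add: mconj_def group.inv_closed group.is_monoid monoid.m_closed)

lemma mconj_one:
  fixes G (structure)
  assumes gr: "group G" and y: "y \<in> carrier G" shows "mconj G y \<one> = \<one>"
proof -
  interpret group G by (rule gr)
  show ?thesis using y by (simp add: mconj_def)
qed

lemma mconj_eq_one:
  fixes G (structure)
  assumes gr: "group G" and y: "y \<in> carrier G" and x: "x \<in> carrier G" and e: "mconj G y x = \<one>"
  shows "x = \<one>"
proof -
  interpret group G by (rule gr)
  have "y \<otimes> x \<otimes> inv y = \<one>" using e by (simp add: mconj_def)
  moreover have "y \<otimes> x = y \<otimes> x \<otimes> inv y \<otimes> y" using x y by (simp add: m_assoc)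
  ultimately have "y = y \<otimes> x" using y by simp
  thus ?thesis using x y by (metis l_cancel_one')
qed

lemma mconj_central:
  fixes G (structure)
  assumes gr: "group G" and z: "z \<in> group_center G" and x: "x \<in> carrier G"
  shows "mconj G z x = x"
proof -
  interpret group G by (rule gr)
  have zc: "z \<in> carrier G" and c: "z \<otimes> x = x \<otimes> z" using z x by (auto simp: group_center_def)
  show ?thesis unfolding mconj_def using zc x c by (simp add: m_assoc)
qed

lemma star_lie_right:
  fixes G (structure)
  assumes G: "mla G" and a: "a \<in> carrier G" and z: "z \<in> lie_center G"
  shows "star G a z = \<one>"
proof -
  interpret group G using G by (rule mla_group)
  have gr: "group G" using G by (rule mla_group)
  have zc: "z \<in> carrier G" using z by (simp add: lie_center_def)
  have az: "a \<otimes> z \<in> carrier G" using a zc by simp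
  have "\<one> = star G (a \<otimes> z) (a \<otimes> z)" using mla_star_self[OF G az] by simp
  also have "\<dots> = mconj G a (star G z (a \<otimes> z)) \<otimes> star G a (a \<otimes> z)"
    using mla_star_left[OF G a zc az] .
  also have "star G z (a \<otimes> z) = \<one>" using z az by (simp add: lie_center_def)
  also have "star G a (a \<otimes> z) = star G a a \<otimes> mconj G a (star G a z)"
    using mla_star_right[OF G a a zc] .
  finally have "\<one> = mconj G a (star G a z)"
    using a zc mla_star_self[OF G a] mconj_one[OF gr a]
    by (simp add: mconj_closed[OF gr] mla_star_closed[OF G])
  then show ?thesis using mconj_eq_one[OF gr a] mla_star_closed[OF G a zc] by simp
qed

lemma star_central_left:
  fixes G (structure)
  assumes G: "mla G" and z: "z \<in> mla_center G" and x: "x \<in> carrier G" and y: "y \<in> carrier G"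
  shows "star G (z \<otimes> x) y = star G x y"
proof -
  interpret group G using G by (rule mla_group)
  have gr: "group G" using G by (rule mla_group)
  have zc: "z \<in> carrier G" using z by (simp add: mla_center_def lie_center_def)
  have "star G (z \<otimes> x) y = mconj G z (star G x y) \<otimes> star G z y" using mla_star_left[OF G zc x y] .
  also have "star G z y = \<one>" using z y by (simp add: mla_center_def lie_center_def)
  also have "mconj G z (star G x y) = star G x y"
    using mconj_central[OF gr _ mla_star_closed[OF G x y]] z by (simp add: mla_center_def)
  finally show ?thesis using mla_star_closed[OF G x y] by simp
qed

lemma star_central_right:
  fixes G (structure)
  assumes G: "mla G" and z: "z \<in> mla_center G" and x: "x \<in> carrier G" and y: "y \<in> carrier G"
  shows "star G x (z \<otimes> y) = star G x y"
proof -
  interpret group G using G by (rule mla_group)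
  have gr: "group G" using G by (rule mla_group)
  have zc: "z \<in> carrier G" using z by (simp add: mla_center_def lie_center_def)
  have "star G x (z \<otimes> y) = star G x z \<otimes> mconj G z (star G x y)" using mla_star_right[OF G x zc y] .
  also have "star G x z = \<one>" using star_lie_right[OF G x] z by (simp add: mla_center_def)
  also have "mconj G z (star G x y) = star G x y"
    using mconj_central[OF gr _ mla_star_closed[OF G x y]] z by (simp add: mla_center_def)
  finally show ?thesis using mla_star_closed[OF G x y] by simp
qed

lemma mla_group_hom: "mla F \<Longrightarrow> mla G \<Longrightarrow> mla_hom F G h \<Longrightarrow> group_hom F G h"
  by (simp add: group_hom_def group_hom_axioms_def mla_group mla_hom_def)

lemma mla_hom_star: "mla_hom F G h \<Longrightarrow> x \<in> carrier F \<Longrightarrow> y \<in> carrier F \<Longrightarrow> h (star F x y) = star G (h x) (h y)"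
  by (simp add: mla_hom_def)

definition mgens :: "('a, 'b) mla_scheme \<Rightarrow> 'a set \<Rightarrow> 'a set \<Rightarrow> 'a set" where
  "mgens G A B = {star G a b | a b. a \<in> A \<and> b \<in> B} \<union>
      {a \<otimes>\<^bsub>G\<^esub> b \<otimes>\<^bsub>G\<^esub> inv\<^bsub>G\<^esub> a \<otimes>\<^bsub>G\<^esub> inv\<^bsub>G\<^esub> b | a b. a \<in> A \<and> b \<in> B}"

lemma mcomm_gens: "mcomm G A B = generate G (mgens G A B)"
  by (simp add: mcomm_def mgens_def)

lemma mgens_sub:
  fixes G (structure)
  assumes G: "mla G" and A: "A \<subseteq> carrier G" and B: "B \<subseteq> carrier G"
  shows "mgens G A B \<subseteq> carrier G"
proof -
  interpret group G using G by (rule mla_group)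
  show ?thesis using A B mla_star_closed[OF G] unfolding mgens_def by blast
qed

lemma mcomm_subgroup:
  assumes G: "mla G" and A: "A \<subseteq> carrier G" and B: "B \<subseteq> carrier G"
  shows "subgroup (mcomm G A B) G"
  unfolding mcomm_gens using group.generate_is_subgroup[OF mla_group[OF G] mgens_sub[OF assms]] .

lemma mcomm_carrier:
  assumes G: "mla G" and A: "A \<subseteq> carrier G" and B: "B \<subseteq> carrier G"
  shows "mcomm G A B \<subseteq> carrier G"
  using subgroup.subset[OF mcomm_subgroup[OF assms]] .

lemma mcomm_incl:
  fixes G (structure)
  assumes G: "mla G" and A: "A \<subseteq> carrier G" and B: "B \<subseteq> carrier G" and H: "subgroup H G"
    and st: "\<And>a b. a \<in> A \<Longrightarrow> b \<in> B \<Longrightarrow> star G a b \<in> H"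
    and cm: "\<And>a b. a \<in> A \<Longrightarrow> b \<in> B \<Longrightarrow> a \<otimes> b \<otimes> inv a \<otimes> inv b \<in> H"
  shows "mcomm G A B \<subseteq> H"
proof -
  interpret group G using G by (rule mla_group)
  have "mgens G A B \<subseteq> H" using st cm unfolding mgens_def by blast
  thus ?thesis unfolding mcomm_gens using generate_subgroup_incl[OF _ H] by blast
qed

lemma commutator_central:
  fixes G (structure)
  assumes gr: "group G" and z1: "z1 \<in> group_center G" and z2: "z2 \<in> group_center G"
    and x: "x \<in> carrier G" and y: "y \<in> carrier G"
  shows "(z1 \<otimes> x) \<otimes> (z2 \<otimes> y) \<otimes> inv (z1 \<otimes> x) \<otimes> inv (z2 \<otimes> y) = x \<otimes> y \<otimes> inv x \<otimes> inv y"
proof -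
  interpret group G by (rule gr)
  have z1c: "z1 \<in> carrier G" and z2c: "z2 \<in> carrier G" using z1 z2 by (auto simp: group_center_def)
  have c2: "z2 \<otimes> w = w \<otimes> z2" if "w \<in> carrier G" for w
    using z2 that by (auto simp: group_center_def)
  have m1: "z1 \<otimes> w \<otimes> inv z1 = w" if "w \<in> carrier G" for w
    using mconj_central[OF gr z1 that] by (simp add: mconj_def)
  have m2: "z2 \<otimes> w \<otimes> inv z2 = w" if "w \<in> carrier G" for w
    using mconj_central[OF gr z2 that] by (simp add: mconj_def)
  have "(z1 \<otimes> x) \<otimes> (z2 \<otimes> y) \<otimes> inv (z1 \<otimes> x) = z1 \<otimes> (x \<otimes> (z2 \<otimes> y) \<otimes> inv x) \<otimes> inv z1"
    using z1c z2c x y by (simp add: m_assoc inv_mult_group)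
  also have "\<dots> = x \<otimes> (z2 \<otimes> y) \<otimes> inv x"
    using m1 z2c x y by simp
  also have "x \<otimes> (z2 \<otimes> y) = z2 \<otimes> (x \<otimes> y)"
    using z2c x y c2[OF x] by (simp flip: m_assoc)
  finally have "(z1 \<otimes> x) \<otimes> (z2 \<otimes> y) \<otimes> inv (z1 \<otimes> x) \<otimes> inv (z2 \<otimes> y)
      = z2 \<otimes> (x \<otimes> y) \<otimes> inv x \<otimes> (inv y \<otimes> inv z2)"
    using z2c y x by (simp add: inv_mult_group)
  also have "\<dots> = z2 \<otimes> (x \<otimes> y \<otimes> inv x \<otimes> inv y) \<otimes> inv z2"
    using z2c y x by (simp add: m_assoc)
  also have "\<dots> = x \<otimes> y \<otimes> inv x \<otimes> inv y"
    using m2 x y by simp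
  finally show ?thesis .
qed

lemma lift_agree:
  fixes F (structure) and G (structure)
  assumes F: "mla F" and G: "mla G" and th: "mla_hom F G \<theta>" and th': "mla_hom F G \<theta>'"
    and K: "group K" and b: "\<beta> \<in> hom G K" and ker: "kernel G K \<beta> \<subseteq> mla_center G"
    and eq: "\<And>x. x \<in> carrier F \<Longrightarrow> \<beta> (\<theta> x) = \<beta> (\<theta>' x)"
    and x: "x \<in> mcomm F (carrier F) (carrier F)"
  shows "\<theta> x = \<theta>' x"
proof -
  interpret F: group F using F by (rule mla_group)
  interpret G: group G using G by (rule mla_group)
  interpret T: group_hom F G \<theta> using mla_group_hom[OF F G th] .
  interpret T': group_hom F G \<theta>' using mla_group_hom[OF F G th'] .
  interpret B: group_hom G K \<beta> using K b by (simp add: group_hom_def group_hom_axioms_def G.group_axioms)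
  have gr: "group G" by (rule G.group_axioms)
  define z where "z a = \<theta>' a \<otimes>\<^bsub>G\<^esub> inv\<^bsub>G\<^esub> (\<theta> a)" for a
  have zc: "z a \<in> mla_center G" if a: "a \<in> carrier F" for a
  proof -
    have "\<beta> (z a) = \<one>\<^bsub>K\<^esub>" using a eq[OF a] by (simp add: z_def)
    thus ?thesis using ker a by (auto simp: kernel_def z_def)
  qed
  have zeq: "\<theta>' a = z a \<otimes>\<^bsub>G\<^esub> \<theta> a" if a: "a \<in> carrier F" for a
    using a by (simp add: z_def G.m_assoc)
  have zcar: "z a \<in> carrier G" if "a \<in> carrier F" for a
    using zc[OF that] by (simp add: mla_center_def lie_center_def)
  have H: "subgroup {x \<in> carrier F. \<theta> x = \<theta>' x} F"
    by (rule F.subgroupI) (auto simp: T.hom_mult T'.hom_mult)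
  have "mcomm F (carrier F) (carrier F) \<subseteq> {x \<in> carrier F. \<theta> x = \<theta>' x}"
  proof (rule mcomm_incl[OF F subset_refl subset_refl H])
    fix a b assume a: "a \<in> carrier F" and b: "b \<in> carrier F"
    have "\<theta>' (star F a b) = star G (z a \<otimes>\<^bsub>G\<^esub> \<theta> a) (z b \<otimes>\<^bsub>G\<^esub> \<theta> b)"
      using mla_hom_star[OF th' a b] zeq a b by simp
    also have "\<dots> = star G (\<theta> a) (\<theta> b)"
      using star_central_left[OF G zc[OF a]] star_central_right[OF G zc[OF b]] a b zcar
      by simp
    finally show "star F a b \<in> {x \<in> carrier F. \<theta> x = \<theta>' x}"
      using mla_hom_star[OF th a b] a b mla_star_closed[OF F a b] by simp
  next
    fix a b assume a: "a \<in> carrier F" and b: "b \<in> carrier F"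
    have "\<theta>' (a \<otimes> b \<otimes> inv a \<otimes> inv b) = (z a \<otimes>\<^bsub>G\<^esub> \<theta> a) \<otimes>\<^bsub>G\<^esub> (z b \<otimes>\<^bsub>G\<^esub> \<theta> b)
       \<otimes>\<^bsub>G\<^esub> inv\<^bsub>G\<^esub> (z a \<otimes>\<^bsub>G\<^esub> \<theta> a) \<otimes>\<^bsub>G\<^esub> inv\<^bsub>G\<^esub> (z b \<otimes>\<^bsub>G\<^esub> \<theta> b)"
      using a b by (simp add: T'.hom_mult flip: zeq)
    also have "\<dots> = \<theta> a \<otimes>\<^bsub>G\<^esub> \<theta> b \<otimes>\<^bsub>G\<^esub> inv\<^bsub>G\<^esub> (\<theta> a) \<otimes>\<^bsub>G\<^esub> inv\<^bsub>G\<^esub> (\<theta> b)"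
      using commutator_central[OF gr, of "z a" "z b" "\<theta> a" "\<theta> b"] zc[OF a] zc[OF b] a b
      by (simp add: mla_center_def)
    finally show "a \<otimes> b \<otimes> inv a \<otimes> inv b \<in> {x \<in> carrier F. \<theta> x = \<theta>' x}"
      using a b by (simp add: T.hom_mult)
  qed
  thus ?thesis using x by blast
qed

lemma lift_kills:
  fixes F (structure) and G (structure)
  assumes F: "mla F" and G: "mla G" and th: "mla_hom F G \<theta>"
    and K: "group K" and b: "\<beta> \<in> hom G K" and ker: "kernel G K \<beta> \<subseteq> mla_center G"
    and pi: "\<pi> \<in> hom F K"
    and eq: "\<And>x. x \<in> carrier F \<Longrightarrow> \<beta> (\<theta> x) = \<pi> x"
    and x: "x \<in> mcomm F (kernel F K \<pi>) (carrier F)"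
  shows "\<theta> x = \<one>\<^bsub>G\<^esub>"
proof -
  interpret F: group F using F by (rule mla_group)
  interpret G: group G using G by (rule mla_group)
  interpret T: group_hom F G \<theta> using mla_group_hom[OF F G th] .
  interpret B: group_hom G K \<beta> using K b by (simp add: group_hom_def group_hom_axioms_def G.group_axioms)
  interpret P: group_hom F K \<pi> using K pi by (simp add: group_hom_def group_hom_axioms_def F.group_axioms)
  have gr: "group G" by (rule G.group_axioms)
  have zc: "\<theta> r \<in> mla_center G" if r: "r \<in> kernel F K \<pi>" for r
    using r ker eq by (auto simp: kernel_def)
  have Rsub: "kernel F K \<pi> \<subseteq> carrier F" by (auto simp: kernel_def)
  have "mcomm F (kernel F K \<pi>) (carrier F) \<subseteq> kernel F G \<theta>"
  proof (rule mcomm_incl[OF F Rsub subset_refl T.subgroup_kernel])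
    fix a b assume a: "a \<in> kernel F K \<pi>" and b: "b \<in> carrier F"
    have ac: "a \<in> carrier F" using a Rsub by blast
    show "star F a b \<in> kernel F G \<theta>"
      using mla_hom_star[OF th ac b] zc[OF a] b ac mla_star_closed[OF F ac b]
      by (auto simp: kernel_def mla_center_def lie_center_def)
  next
    fix a b assume a: "a \<in> kernel F K \<pi>" and b: "b \<in> carrier F"
    have ac: "a \<in> carrier F" using a Rsub by blast
    have "\<theta> (a \<otimes> b \<otimes> inv a \<otimes> inv b) = \<theta> a \<otimes>\<^bsub>G\<^esub> \<theta> b \<otimes>\<^bsub>G\<^esub> inv\<^bsub>G\<^esub> (\<theta> a) \<otimes>\<^bsub>G\<^esub> inv\<^bsub>G\<^esub> (\<theta> b)"
      using ac b by (simp add: T.hom_mult)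
    also have "\<theta> a \<otimes>\<^bsub>G\<^esub> \<theta> b \<otimes>\<^bsub>G\<^esub> inv\<^bsub>G\<^esub> (\<theta> a) = \<theta> b"
      using mconj_central[OF gr, of "\<theta> a" "\<theta> b"] zc[OF a] b by (simp add: mla_center_def mconj_def)
    finally show "a \<otimes> b \<otimes> inv a \<otimes> inv b \<in> kernel F G \<theta>"
      using ac b by (simp add: kernel_def)
  qed
  thus ?thesis using x by (auto simp: kernel_def)
qed

lemma ball_img: "(\<forall>x\<in>f ` A. P x) \<longleftrightarrow> (\<forall>a\<in>A. P (f a))" by blast

definition mtrans :: "('a, 'c) mla_scheme \<Rightarrow> ('a \<Rightarrow> 't) \<Rightarrow> 't mla" where
  "mtrans K \<sigma> = \<lparr> carrier = \<sigma> ` carrier K,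
     monoid.mult = (\<lambda>a b. \<sigma> (inv_into (carrier K) \<sigma> a \<otimes>\<^bsub>K\<^esub> inv_into (carrier K) \<sigma> b)),
     monoid.one = \<sigma> \<one>\<^bsub>K\<^esub>,
     star = (\<lambda>a b. \<sigma> (star K (inv_into (carrier K) \<sigma> a) (inv_into (carrier K) \<sigma> b))) \<rparr>"

context
  fixes K :: "('a, 'c) mla_scheme" and \<sigma> :: "'a \<Rightarrow> 't"
  assumes K: "mla K" and inj: "inj_on \<sigma> (carrier K)"
begin

interpretation KG: group K using K by (rule mla_group)

lemma tr_carrier: "carrier (mtrans K \<sigma>) = \<sigma> ` carrier K" by (simp add: mtrans_def)
lemma tr_one: "\<one>\<^bsub>mtrans K \<sigma>\<^esub> = \<sigma> \<one>\<^bsub>K\<^esub>" by (simp add: mtrans_def)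
lemma tr_mult: "a \<in> carrier K \<Longrightarrow> b \<in> carrier K \<Longrightarrow> \<sigma> a \<otimes>\<^bsub>mtrans K \<sigma>\<^esub> \<sigma> b = \<sigma> (a \<otimes>\<^bsub>K\<^esub> b)"
  by (simp add: mtrans_def inv_into_f_f[OF inj])
lemma tr_star: "a \<in> carrier K \<Longrightarrow> b \<in> carrier K \<Longrightarrow> star (mtrans K \<sigma>) (\<sigma> a) (\<sigma> b) = \<sigma> (star K a b)"
  by (simp add: mtrans_def inv_into_f_f[OF inj])

lemma tr_group: "group (mtrans K \<sigma>)"
proof (rule groupI)
  show "\<one>\<^bsub>mtrans K \<sigma>\<^esub> \<in> carrier (mtrans K \<sigma>)" by (simp add: tr_one tr_carrier)
next
  fix x y assume "x \<in> carrier (mtrans K \<sigma>)" "y \<in> carrier (mtrans K \<sigma>)"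
  then show "x \<otimes>\<^bsub>mtrans K \<sigma>\<^esub> y \<in> carrier (mtrans K \<sigma>)"
    by (auto simp: tr_carrier tr_mult)
next
  fix x y z assume "x \<in> carrier (mtrans K \<sigma>)" "y \<in> carrier (mtrans K \<sigma>)" "z \<in> carrier (mtrans K \<sigma>)"
  then show "x \<otimes>\<^bsub>mtrans K \<sigma>\<^esub> y \<otimes>\<^bsub>mtrans K \<sigma>\<^esub> z = x \<otimes>\<^bsub>mtrans K \<sigma>\<^esub> (y \<otimes>\<^bsub>mtrans K \<sigma>\<^esub> z)"
    by (auto simp: tr_carrier tr_mult KG.m_assoc)
next
  fix x assume "x \<in> carrier (mtrans K \<sigma>)"
  then show "\<one>\<^bsub>mtrans K \<sigma>\<^esub> \<otimes>\<^bsub>mtrans K \<sigma>\<^esub> x = x"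
    by (auto simp: tr_carrier tr_mult tr_one)
next
  fix x assume "x \<in> carrier (mtrans K \<sigma>)"
  then obtain a where a: "a \<in> carrier K" "x = \<sigma> a" by (auto simp: tr_carrier)
  show "\<exists>y\<in>carrier (mtrans K \<sigma>). y \<otimes>\<^bsub>mtrans K \<sigma>\<^esub> x = \<one>\<^bsub>mtrans K \<sigma>\<^esub>"
    by (rule bexI[of _ "\<sigma> (inv\<^bsub>K\<^esub> a)"]) (use a in \<open>auto simp: tr_carrier tr_mult tr_one\<close>)
qed

lemma tr_inv: "a \<in> carrier K \<Longrightarrow> inv\<^bsub>mtrans K \<sigma>\<^esub> (\<sigma> a) = \<sigma> (inv\<^bsub>K\<^esub> a)"
  by (rule group.inv_equality[OF tr_group]) (auto simp: tr_carrier tr_mult tr_one)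

lemma tr_mconj: "a \<in> carrier K \<Longrightarrow> b \<in> carrier K \<Longrightarrow> mconj (mtrans K \<sigma>) (\<sigma> a) (\<sigma> b) = \<sigma> (mconj K a b)"
  by (simp add: mconj_def tr_inv tr_mult)

lemma tr_mla: "mla (mtrans K \<sigma>)"
proof -
  note sc = mla_star_closed[OF K]
  have mc: "\<And>a b. a \<in> carrier K \<Longrightarrow> b \<in> carrier K \<Longrightarrow> mconj K a b \<in> carrier K"
    by (rule mconj_closed[OF KG.group_axioms])
  show ?thesis
    unfolding mla_def tr_carrier ball_img
    using K unfolding mla_def
    by (simp add: tr_group tr_star tr_mult tr_mconj tr_one sc mc)
qed

lemma tr_hom: "mla_hom K (mtrans K \<sigma>) \<sigma>"
  unfolding mla_hom_def by (auto intro!: homI simp: tr_carrier tr_mult tr_star)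

end

lemma mla_hom_comp: "mla_hom A B f \<Longrightarrow> mla_hom B C g \<Longrightarrow> mla_hom A C (g \<circ> f)"
  unfolding mla_hom_def hom_def by (auto simp: Pi_def)

lemma mla_hom_carrier: "mla_hom A B f \<Longrightarrow> x \<in> carrier A \<Longrightarrow> f x \<in> carrier B"
  unfolding mla_hom_def hom_def by auto

lemma lift_exists:
  fixes F :: "('f, 'c) mla_scheme" and G :: "'t mla" and K :: "('k, 'd) mla_scheme" and \<sigma> :: "'k \<Rightarrow> 't"
  assumes free: "free_mla F S TYPE('t)" and G: "mla G" and K: "mla K" and b: "mla_hom G K \<beta>"
    and surj: "\<beta> ` carrier G = carrier K" and pi: "mla_hom F K \<pi>" and inj: "inj_on \<sigma> (carrier K)"
  shows "\<exists>\<theta>. mla_hom F G \<theta> \<and> (\<forall>x\<in>carrier F. \<beta> (\<theta> x) = \<pi> x)"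
proof -
  have SF: "S \<subseteq> carrier F" using free by (simp add: free_mla_def)
  define f where "f s = inv_into (carrier G) \<beta> (\<pi> s)" for s
  have piK: "\<pi> s \<in> carrier K" if "s \<in> carrier F" for s using mla_hom_carrier[OF pi that] .
  have fG: "f ` S \<subseteq> carrier G"
    using SF piK surj by (auto simp: f_def intro!: inv_into_into)
  have bf: "\<beta> (f s) = \<pi> s" if "s \<in> S" for s
    using SF piK surj that by (auto simp: f_def intro!: f_inv_into_f)
  have univ: "\<And>(H :: 't mla) g. mla H \<Longrightarrow> g ` S \<subseteq> carrier H \<Longrightarrow>
        (\<exists>h. mla_hom F H h \<and> (\<forall>x\<in>S. h x = g x)) \<and>
        (\<forall>h h'. mla_hom F H h \<longrightarrow> mla_hom F H h' \<longrightarrow> (\<forall>x\<in>S. h x = h' x) \<longrightarrow>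
           (\<forall>x\<in>carrier F. h x = h' x))"
    using free unfolding free_mla_def by blast
  obtain \<theta> where th: "mla_hom F G \<theta>" and ths: "\<forall>x\<in>S. \<theta> x = f x"
    using univ[OF G fG] by blast
  let ?T = "mtrans K \<sigma>"
  have T: "mla ?T" using tr_mla[OF K inj] .
  have h1: "mla_hom F ?T (\<sigma> \<circ> \<beta> \<circ> \<theta>)"
    using mla_hom_comp[OF mla_hom_comp[OF th b] tr_hom[OF K inj]] by (simp add: comp_assoc)
  have h2: "mla_hom F ?T (\<sigma> \<circ> \<pi>)" using mla_hom_comp[OF pi tr_hom[OF K inj]] .
  have sT: "(\<sigma> \<circ> \<pi>) ` S \<subseteq> carrier ?T" using SF piK by (auto simp: tr_carrier[OF K inj])
  have agree: "\<forall>x\<in>S. (\<sigma> \<circ> \<beta> \<circ> \<theta>) x = (\<sigma> \<circ> \<pi>) x" using ths bf by simp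
  have all: "\<forall>x\<in>carrier F. (\<sigma> \<circ> \<beta> \<circ> \<theta>) x = (\<sigma> \<circ> \<pi>) x"
    using univ[OF T sT] h1 h2 agree by blast
  have "\<forall>x\<in>carrier F. \<beta> (\<theta> x) = \<pi> x"
  proof
    fix x assume x: "x \<in> carrier F"
    have "\<beta> (\<theta> x) \<in> carrier K" using mla_hom_carrier[OF b mla_hom_carrier[OF th x]] .
    thus "\<beta> (\<theta> x) = \<pi> x" using all x inj piK[OF x] by (auto dest: inj_onD)
  qed
  thus ?thesis using th by blast
qed

context
  fixes G1 :: "('a, 'c) mla_scheme" and G2 :: "('b, 'd) mla_scheme"
    and K1 :: "('k, 'e) mla_scheme" and K2 :: "('l, 'f) mla_scheme"
    and \<beta>1 \<beta>2 \<nu>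
  assumes G1: "mla G1" and G2: "mla G2" and K1: "mla K1" and K2: "mla K2"
    and b1: "mla_hom G1 K1 \<beta>1" and b2: "mla_hom G2 K2 \<beta>2" and nu: "mla_hom K1 K2 \<nu>"
begin

interpretation A: group_hom G1 K1 \<beta>1 using mla_group_hom[OF G1 K1 b1] .
interpretation B: group_hom G2 K2 \<beta>2 using mla_group_hom[OF G2 K2 b2] .
interpretation N: group_hom K1 K2 \<nu> using mla_group_hom[OF K1 K2 nu] .

abbreviation "P \<equiv> fibre_prod G1 G2 \<beta>1 \<beta>2 \<nu>"

lemma fp_carrier: "(a, b) \<in> carrier P \<longleftrightarrow> a \<in> carrier G1 \<and> b \<in> carrier G2 \<and> \<nu> (\<beta>1 a) = \<beta>2 b"
  by (simp add: fibre_prod_def)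
lemma fp_mult: "(a, b) \<otimes>\<^bsub>P\<^esub> (c, d) = (a \<otimes>\<^bsub>G1\<^esub> c, b \<otimes>\<^bsub>G2\<^esub> d)"
  by (simp add: fibre_prod_def)
lemma fp_one: "\<one>\<^bsub>P\<^esub> = (\<one>\<^bsub>G1\<^esub>, \<one>\<^bsub>G2\<^esub>)"
  by (simp add: fibre_prod_def)
lemma fp_star: "star P (a, b) (c, d) = (star G1 a c, star G2 b d)"
  by (simp add: fibre_prod_def)

lemma nb1: "a \<in> carrier G1 \<Longrightarrow> \<beta>1 a \<in> carrier K1" by simp

lemma fp_group: "group P"
proof (rule groupI)
  show "\<one>\<^bsub>P\<^esub> \<in> carrier P" by (simp add: fp_one fp_carrier)
next
  fix x y assume "x \<in> carrier P" "y \<in> carrier P"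
  then show "x \<otimes>\<^bsub>P\<^esub> y \<in> carrier P"
    by (cases x, cases y) (auto simp: fp_carrier fp_mult A.hom_mult B.hom_mult N.hom_mult)
next
  fix x y z assume "x \<in> carrier P" "y \<in> carrier P" "z \<in> carrier P"
  then show "x \<otimes>\<^bsub>P\<^esub> y \<otimes>\<^bsub>P\<^esub> z = x \<otimes>\<^bsub>P\<^esub> (y \<otimes>\<^bsub>P\<^esub> z)"
    by (cases x, cases y, cases z) (auto simp: fp_carrier fp_mult A.G.m_assoc B.G.m_assoc)
next
  fix x assume "x \<in> carrier P"
  then show "\<one>\<^bsub>P\<^esub> \<otimes>\<^bsub>P\<^esub> x = x"
    by (cases x) (auto simp: fp_carrier fp_mult fp_one)
next
  fix x assume "x \<in> carrier P"
  then obtain a b where x: "x = (a, b)" "a \<in> carrier G1" "b \<in> carrier G2" "\<nu> (\<beta>1 a) = \<beta>2 b"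
    by (cases x) (auto simp: fp_carrier)
  show "\<exists>y\<in>carrier P. y \<otimes>\<^bsub>P\<^esub> x = \<one>\<^bsub>P\<^esub>"
    by (rule bexI[of _ "(inv\<^bsub>G1\<^esub> a, inv\<^bsub>G2\<^esub> b)"]) (use x in \<open>auto simp: fp_carrier fp_mult fp_one\<close>)
qed

lemma fp_inv: "(a, b) \<in> carrier P \<Longrightarrow> inv\<^bsub>P\<^esub> (a, b) = (inv\<^bsub>G1\<^esub> a, inv\<^bsub>G2\<^esub> b)"
  by (rule group.inv_equality[OF fp_group]) (auto simp: fp_carrier fp_mult fp_one)

lemma fp_mconj: "(a, b) \<in> carrier P \<Longrightarrow>
   mconj P (a, b) (c, d) = (mconj G1 a c, mconj G2 b d)"
  by (simp add: mconj_def fp_inv fp_mult)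

lemma fp_star_closed: "(a, b) \<in> carrier P \<Longrightarrow> (c, d) \<in> carrier P \<Longrightarrow> star P (a, b) (c, d) \<in> carrier P"
  using mla_hom_star[OF b1] mla_hom_star[OF b2] mla_hom_star[OF nu]
  by (auto simp: fp_carrier fp_star mla_star_closed[OF G1] mla_star_closed[OF G2])

lemma fp_mla: "mla P"
proof -
  have gP: "group P" by (rule fp_group)
  note c1 = mla_star_closed[OF G1] mconj_closed[OF A.G.group_axioms]
  note c2 = mla_star_closed[OF G2] mconj_closed[OF B.G.group_axioms]
  have closed: "\<And>x y. x \<in> carrier P \<Longrightarrow> y \<in> carrier P \<Longrightarrow> star P x y \<in> carrier P"
    using fp_star_closed by auto
  have mcl: "\<And>x y. x \<in> carrier P \<Longrightarrow> y \<in> carrier P \<Longrightarrow> mconj P x y \<in> carrier P"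
    using mconj_closed[OF gP] by auto
  have pc: "x \<in> carrier P \<Longrightarrow> (\<And>a b. x = (a, b) \<Longrightarrow> a \<in> carrier G1 \<Longrightarrow> b \<in> carrier G2 \<Longrightarrow> \<nu> (\<beta>1 a) = \<beta>2 b \<Longrightarrow> Q) \<Longrightarrow> Q" for x Q
    by (cases x) (auto simp: fp_carrier)
  show ?thesis
    unfolding mla_def
  proof (intro conjI gP ballI closed)
    fix x assume "x \<in> carrier P"
    then show "star P x x = \<one>\<^bsub>P\<^esub>"
      by (elim pc) (simp add: fp_carrier fp_star fp_one mla_star_self[OF G1] mla_star_self[OF G2])
  next
    fix x y z assume "x \<in> carrier P" "y \<in> carrier P" "z \<in> carrier P"
    then show "star P x (y \<otimes>\<^bsub>P\<^esub> z) = star P x y \<otimes>\<^bsub>P\<^esub> mconj P y (star P x z)"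
      by (elim pc) (simp add: fp_carrier fp_star fp_mult fp_mconj mla_star_right[OF G1] mla_star_right[OF G2])
  next
    fix x y z assume "x \<in> carrier P" "y \<in> carrier P" "z \<in> carrier P"
    then show "star P (x \<otimes>\<^bsub>P\<^esub> y) z = mconj P x (star P y z) \<otimes>\<^bsub>P\<^esub> star P x z"
      by (elim pc) (simp add: fp_carrier fp_star fp_mult fp_mconj mla_star_left[OF G1] mla_star_left[OF G2])
  next
    fix x y z assume xyz: "x \<in> carrier P" "y \<in> carrier P" "z \<in> carrier P"
    then show "star P (star P x y) (mconj P y z) \<otimes>\<^bsub>P\<^esub> star P (star P y z) (mconj P z x)
          \<otimes>\<^bsub>P\<^esub> star P (star P z x) (mconj P x y) = \<one>\<^bsub>P\<^esub>"
      by (elim pc) (simp add: fp_carrier fp_star fp_mult fp_mconj fp_one mla_jacobi[OF G1] mla_jacobi[OF G2])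
  next
    fix x y z assume "x \<in> carrier P" "y \<in> carrier P" "z \<in> carrier P"
    then show "mconj P z (star P x y) = star P (mconj P z x) (mconj P z y)"
      by (elim pc) (simp add: fp_carrier fp_star fp_mult fp_mconj mla_conj_star[OF G1] mla_conj_star[OF G2])
  qed
qed

lemma fp_hom: "mla_hom P K1 (\<beta>1 \<circ> fst)"
  unfolding mla_hom_def
  by (auto intro!: homI simp: fp_carrier fp_mult fp_star mla_hom_star[OF b1])

lemma fp_surj:
  assumes s1: "\<beta>1 ` carrier G1 = carrier K1" and s2: "\<beta>2 ` carrier G2 = carrier K2"
  shows "(\<beta>1 \<circ> fst) ` carrier P = carrier K1"
proof
  show "(\<beta>1 \<circ> fst) ` carrier P \<subseteq> carrier K1" by (auto simp: fibre_prod_def)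
next
  show "carrier K1 \<subseteq> (\<beta>1 \<circ> fst) ` carrier P"
  proof
    fix k assume k: "k \<in> carrier K1"
    define g1 where "g1 = inv_into (carrier G1) \<beta>1 k"
    define g2 where "g2 = inv_into (carrier G2) \<beta>2 (\<nu> k)"
    have nk: "\<nu> k \<in> carrier K2" using k by simp
    have "g1 \<in> carrier G1" "\<beta>1 g1 = k" using k s1 by (auto simp: g1_def intro: inv_into_into f_inv_into_f)
    moreover have "g2 \<in> carrier G2" "\<beta>2 g2 = \<nu> k" using nk s2 by (auto simp: g2_def intro: inv_into_into f_inv_into_f)
    ultimately have "(g1, g2) \<in> carrier P" by (simp add: fp_carrier)
    thus "k \<in> (\<beta>1 \<circ> fst) ` carrier P" using \<open>\<beta>1 g1 = k\<close> by force
  qed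
qed

end

lemma the_elem_coset:
  fixes F (structure)
  assumes gr: "group F" and D: "D \<subseteq> carrier F" and one: "\<one> \<in> D" and x: "x \<in> carrier F"
    and f: "\<And>d. d \<in> D \<Longrightarrow> f (d \<otimes> x) = f x"
  shows "the_elem (f ` (D #> x)) = f x"
proof -
  interpret group F by (rule gr)
  have "f ` (D #> x) = {f x}"
  proof
    show "f ` (D #> x) \<subseteq> {f x}" using f by (auto simp: r_coset_def)
    show "{f x} \<subseteq> f ` (D #> x)" using one x
      by (auto simp: r_coset_def intro!: image_eqI[of _ _ "\<one> \<otimes> x"])
  qed
  thus ?thesis by simp
qed

lemma preimage_subgroup:
  assumes h: "group_hom F G h" and H: "subgroup H G"
  shows "subgroup {x \<in> carrier F. h x \<in> H} F"
proof -
  interpret group_hom F G h by (rule h)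
  show ?thesis
    by (rule G.subgroupI) (auto simp: hom_mult subgroup.m_closed[OF H] subgroup.m_inv_closed[OF H]
        subgroup.one_closed[OF H] intro!: exI[of _ "\<one>\<^bsub>F\<^esub>"])
qed

lemma mcomm_map:
  fixes F (structure) and F' (structure)
  assumes F: "mla F" and F': "mla F'" and h: "mla_hom F F' h"
    and A: "A \<subseteq> carrier F" and B: "B \<subseteq> carrier F" and A': "A' \<subseteq> carrier F'" and B': "B' \<subseteq> carrier F'"
    and hA: "h ` A \<subseteq> A'" and hB: "h ` B \<subseteq> B'" and x: "x \<in> mcomm F A B"
  shows "h x \<in> mcomm F' A' B'"
proof -
  interpret group_hom F F' h using mla_group_hom[OF F F' h] .
  have "mcomm F A B \<subseteq> {x \<in> carrier F. h x \<in> mcomm F' A' B'}"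
  proof (rule mcomm_incl[OF F A B preimage_subgroup[OF mla_group_hom[OF F F' h] mcomm_subgroup[OF F' A' B']]])
    fix a b assume a: "a \<in> A" and b: "b \<in> B"
    have ac: "a \<in> carrier F" and bc: "b \<in> carrier F" using a b A B by auto
    have "star F' (h a) (h b) \<in> mgens F' A' B'" using a b hA hB unfolding mgens_def by blast
    hence "star F' (h a) (h b) \<in> mcomm F' A' B'" unfolding mcomm_gens by (rule generate.incl)
    thus "star F a b \<in> {x \<in> carrier F. h x \<in> mcomm F' A' B'}"
      using mla_hom_star[OF h ac bc] mla_star_closed[OF F ac bc] by simp
  next
    fix a b assume a: "a \<in> A" and b: "b \<in> B"
    have ac: "a \<in> carrier F" and bc: "b \<in> carrier F" using a b A B by auto
    have "h a \<otimes>\<^bsub>F'\<^esub> h b \<otimes>\<^bsub>F'\<^esub> inv\<^bsub>F'\<^esub> (h a) \<otimes>\<^bsub>F'\<^esub> inv\<^bsub>F'\<^esub> (h b) \<in> mgens F' A' B'"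
      using a b hA hB unfolding mgens_def by blast
    hence "h a \<otimes>\<^bsub>F'\<^esub> h b \<otimes>\<^bsub>F'\<^esub> inv\<^bsub>F'\<^esub> (h a) \<otimes>\<^bsub>F'\<^esub> inv\<^bsub>F'\<^esub> (h b) \<in> mcomm F' A' B'"
      unfolding mcomm_gens by (rule generate.incl)
    thus "a \<otimes> b \<otimes> inv a \<otimes> inv b \<in> {x \<in> carrier F. h x \<in> mcomm F' A' B'}"
      using ac bc by (simp add: hom_mult)
  qed
  thus ?thesis using x by blast
qed

lemma delta_coset:
  fixes F :: "('f, 'c) mla_scheme" and G :: "('g, 'e) mla_scheme" and K :: "('k, 'd) mla_scheme"
  assumes F: "mla F" and G: "mla G" and K: "mla K" and b: "mla_hom G K \<beta>"
    and ker: "kernel G K \<beta> \<subseteq> mla_center G" and pi: "mla_hom F K \<pi>"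
    and lift: "mla_hom F G (mla_lift F \<pi> G \<beta>)" "\<forall>x\<in>carrier F. \<beta> (mla_lift F \<pi> G \<beta> x) = \<pi> x"
    and x: "x \<in> carrier F"
  shows "schur_delta F \<pi> G \<beta> (schur_den F (kernel F K \<pi>) #>\<^bsub>F\<^esub> x) = mla_lift F \<pi> G \<beta> x"
proof -
  interpret F: group F using F by (rule mla_group)
  interpret T: group_hom F G "mla_lift F \<pi> G \<beta>" using mla_group_hom[OF F G lift(1)] .
  have Rsub: "kernel F K \<pi> \<subseteq> carrier F" by (auto simp: kernel_def)
  have sg: "subgroup (schur_den F (kernel F K \<pi>)) F"
    unfolding schur_den_def by (rule mcomm_subgroup[OF F Rsub subset_refl])
  show ?thesis unfolding schur_delta_def
  proof (rule the_elem_coset[OF F.group_axioms subgroup.subset[OF sg] subgroup.one_closed[OF sg] x])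
    fix d assume d: "d \<in> schur_den F (kernel F K \<pi>)"
    have dc: "d \<in> carrier F" using d subgroup.subset[OF sg] by blast
    have "mla_lift F \<pi> G \<beta> d = \<one>\<^bsub>G\<^esub>"
      using lift_kills[OF F G lift(1) mla_group[OF K] _ ker _ _] b pi lift(2) d
      unfolding schur_den_def mla_hom_def by blast
    thus "mla_lift F \<pi> G \<beta> (d \<otimes>\<^bsub>F\<^esub> x) = mla_lift F \<pi> G \<beta> x"
      using dc x by (simp add: T.hom_mult)
  qed
qed

lemma fp_kernel:
  assumes E1: "central_ext G1 K1 \<beta>1" and E2: "central_ext G2 K2 \<beta>2" and nu: "mla_hom K1 K2 \<nu>"
  shows "kernel (fibre_prod G1 G2 \<beta>1 \<beta>2 \<nu>) K1 (\<beta>1 \<circ> fst) \<subseteq> mla_center (fibre_prod G1 G2 \<beta>1 \<beta>2 \<nu>)"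
proof
  have K1: "mla K1" and K2: "mla K2" using E1 E2 by (auto simp: central_ext_def)
  interpret N: group_hom K1 K2 \<nu> using mla_group_hom[OF K1 K2 nu] .
  fix p assume p: "p \<in> kernel (fibre_prod G1 G2 \<beta>1 \<beta>2 \<nu>) K1 (\<beta>1 \<circ> fst)"
  obtain a b where pab: "p = (a, b)" by (cases p)
  have a: "a \<in> carrier G1" and bb: "b \<in> carrier G2" and ab: "\<nu> (\<beta>1 a) = \<beta>2 b" and a1: "\<beta>1 a = \<one>\<^bsub>K1\<^esub>"
    using p pab by (auto simp: kernel_def fibre_prod_def)
  have "a \<in> kernel G1 K1 \<beta>1" using a a1 by (simp add: kernel_def)
  hence ca: "a \<in> mla_center G1" using E1 by (auto simp: central_ext_def)
  have "b \<in> kernel G2 K2 \<beta>2" using bb ab a1 by (simp add: kernel_def)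
  hence cb: "b \<in> mla_center G2" using E2 by (auto simp: central_ext_def)
  show "p \<in> mla_center (fibre_prod G1 G2 \<beta>1 \<beta>2 \<nu>)"
    using ca cb a bb ab unfolding pab
    by (auto simp: mla_center_def lie_center_def group_center_def fibre_prod_def)
qed

theorem lemma4p17:
  fixes K1 :: "'k1 mla" and K2 :: "'k2 mla" and G1 :: "'g1 mla" and G2 :: "'g2 mla"
    and F1 :: "'f1 mla" and F2 :: "'f2 mla" and S1 :: "'f1 set" and S2 :: "'f2 set"
    and \<beta>1 :: "'g1 \<Rightarrow> 'k1" and \<beta>2 :: "'g2 \<Rightarrow> 'k2" and \<nu> :: "'k1 \<Rightarrow> 'k2"
    and \<pi>1 :: "'f1 \<Rightarrow> 'k1" and \<pi>2 :: "'f2 \<Rightarrow> 'k2"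
  assumes E1: "central_ext G1 K1 \<beta>1"
    and E2: "central_ext G2 K2 \<beta>2"
    and nu_hom: "mla_hom K1 K2 \<nu>" and nu_bij: "bij_betw \<nu> (carrier K1) (carrier K2)"
    and F1_free: "free_mla F1 S1 TYPE('g1)" "free_mla F1 S1 TYPE('g1 \<times> 'g2)"
      "free_mla F1 S1 TYPE('f2)"
    and F2_free: "free_mla F2 S2 TYPE('g2)"
    and pres1: "mla_hom F1 K1 \<pi>1" "\<pi>1 ` carrier F1 = carrier K1"
    and pres2: "mla_hom F2 K2 \<pi>2" "\<pi>2 ` carrier F2 = carrier K2"
  shows "delta_kernel F1 K1 \<pi>1 (fibre_prod G1 G2 \<beta>1 \<beta>2 \<nu>) (\<beta>1 \<circ> fst)
       = {C \<in> schur F1 K1 \<pi>1. schur_map F1 \<pi>1 F2 K2 \<pi>2 \<nu> C \<in> delta_kernel F2 K2 \<pi>2 G2 \<beta>2}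
         \<inter> delta_kernel F1 K1 \<pi>1 G1 \<beta>1"
proof -
  have G1: "mla G1" and K1: "mla K1" and b1: "mla_hom G1 K1 \<beta>1" and s1: "\<beta>1 ` carrier G1 = carrier K1"
    and ker1: "kernel G1 K1 \<beta>1 \<subseteq> mla_center G1" using E1 by (auto simp: central_ext_def)
  have G2: "mla G2" and K2: "mla K2" and b2: "mla_hom G2 K2 \<beta>2" and s2: "\<beta>2 ` carrier G2 = carrier K2"
    and ker2: "kernel G2 K2 \<beta>2 \<subseteq> mla_center G2" using E2 by (auto simp: central_ext_def)
  have F1: "mla F1" using F1_free(1) by (simp add: free_mla_def)
  have F2: "mla F2" using F2_free by (simp add: free_mla_def)
  interpret K1g: group K1 using K1 by (rule mla_group)
  interpret K2g: group K2 using K2 by (rule mla_group)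
  interpret F1g: group F1 using F1 by (rule mla_group)
  interpret F2g: group F2 using F2 by (rule mla_group)
  interpret N: group_hom K1 K2 \<nu> using mla_group_hom[OF K1 K2 nu_hom] .
  interpret P1: group_hom F1 K1 \<pi>1 using mla_group_hom[OF F1 K1 pres1(1)] .
  interpret P2: group_hom F2 K2 \<pi>2 using mla_group_hom[OF F2 K2 pres2(1)] .
  define Gb where "Gb = fibre_prod G1 G2 \<beta>1 \<beta>2 \<nu>"
  have Gb: "mla Gb" unfolding Gb_def by (rule fp_mla[OF G1 G2 K1 K2 b1 b2 nu_hom])
  have bGb: "mla_hom Gb K1 (\<beta>1 \<circ> fst)" unfolding Gb_def by (rule fp_hom[OF G1 G2 K1 K2 b1 b2 nu_hom])
  have sGb: "(\<beta>1 \<circ> fst) ` carrier Gb = carrier K1"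
    unfolding Gb_def by (rule fp_surj[OF G1 G2 K1 K2 b1 b2 nu_hom s1 s2])
  have kerGb: "kernel Gb K1 (\<beta>1 \<circ> fst) \<subseteq> mla_center Gb"
    unfolding Gb_def by (rule fp_kernel[OF E1 E2 nu_hom])
  have nupi: "mla_hom F1 K2 (\<nu> \<circ> \<pi>1)" by (rule mla_hom_comp[OF pres1(1) nu_hom])
  have inj1: "inj_on (inv_into (carrier G1) \<beta>1) (carrier K1)" using s1 by (simp add: inj_on_inv_into)
  have inj2: "inj_on (inv_into (carrier G2) \<beta>2) (carrier K2)" using s2 by (simp add: inj_on_inv_into)
  have injF2: "inj_on (inv_into (carrier F2) \<pi>2) (carrier K2)" using pres2(2) by (simp add: inj_on_inv_into)
  have injb: "inj_on (\<lambda>k. (inv_into (carrier G1) \<beta>1 k, undefined :: 'g2)) (carrier K1)"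
    using inj1 by (auto simp: inj_on_def)
  define \<theta> where "\<theta> = mla_lift F1 \<pi>1 Gb (\<beta>1 \<circ> fst)"
  define \<theta>1 where "\<theta>1 = mla_lift F1 \<pi>1 G1 \<beta>1"
  define \<mu> where "\<mu> = mla_lift F1 (\<nu> \<circ> \<pi>1) F2 \<pi>2"
  define \<theta>2 where "\<theta>2 = mla_lift F2 \<pi>2 G2 \<beta>2"
  have L: "mla_hom F1 Gb \<theta> \<and> (\<forall>x\<in>carrier F1. (\<beta>1 \<circ> fst) (\<theta> x) = \<pi>1 x)"
    unfolding \<theta>_def mla_lift_def
    by (rule someI_ex[OF lift_exists[OF F1_free(2)[folded Gb_def] Gb K1 bGb sGb pres1(1) injb]])
  have L1: "mla_hom F1 G1 \<theta>1 \<and> (\<forall>x\<in>carrier F1. \<beta>1 (\<theta>1 x) = \<pi>1 x)"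
    unfolding \<theta>1_def mla_lift_def
    by (rule someI_ex[OF lift_exists[OF F1_free(1) G1 K1 b1 s1 pres1(1) inj1]])
  have LM: "mla_hom F1 F2 \<mu> \<and> (\<forall>x\<in>carrier F1. \<pi>2 (\<mu> x) = (\<nu> \<circ> \<pi>1) x)"
    unfolding \<mu>_def mla_lift_def
    by (rule someI_ex[OF lift_exists[OF F1_free(3) F2 K2 pres2(1) pres2(2) nupi injF2]])
  have L2: "mla_hom F2 G2 \<theta>2 \<and> (\<forall>x\<in>carrier F2. \<beta>2 (\<theta>2 x) = \<pi>2 x)"
    unfolding \<theta>2_def mla_lift_def
    by (rule someI_ex[OF lift_exists[OF F2_free G2 K2 b2 s2 pres2(1) inj2]])
  have thhom: "mla_hom F1 Gb \<theta>" and theq: "\<And>x. x \<in> carrier F1 \<Longrightarrow> \<beta>1 (fst (\<theta> x)) = \<pi>1 x"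
    using L by auto
  have th1hom: "mla_hom F1 G1 \<theta>1" and th1eq: "\<And>x. x \<in> carrier F1 \<Longrightarrow> \<beta>1 (\<theta>1 x) = \<pi>1 x"
    using L1 by auto
  have muhom: "mla_hom F1 F2 \<mu>" and mueq: "\<And>x. x \<in> carrier F1 \<Longrightarrow> \<pi>2 (\<mu> x) = \<nu> (\<pi>1 x)"
    using LM by auto
  have th2hom: "mla_hom F2 G2 \<theta>2" and th2eq: "\<And>x. x \<in> carrier F2 \<Longrightarrow> \<beta>2 (\<theta>2 x) = \<pi>2 x"
    using L2 by auto
  have fsthom: "mla_hom Gb G1 fst" unfolding Gb_def mla_hom_def
    by (auto intro!: homI simp: fibre_prod_def)
  have sndhom: "mla_hom Gb G2 snd" unfolding Gb_def mla_hom_def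
    by (auto intro!: homI simp: fibre_prod_def)
  have b1h: "\<beta>1 \<in> hom G1 K1" and b2h: "\<beta>2 \<in> hom G2 K2" using b1 b2 by (auto simp: mla_hom_def)
  have thcar: "\<theta> x \<in> carrier Gb" if "x \<in> carrier F1" for x using mla_hom_carrier[OF thhom that] .
  have thcomp: "\<nu> (\<beta>1 (fst (\<theta> x))) = \<beta>2 (snd (\<theta> x))" if "x \<in> carrier F1" for x
    using thcar[OF that] unfolding Gb_def by (cases "\<theta> x") (simp add: fibre_prod_def)
  define R1 where "R1 = kernel F1 K1 \<pi>1"
  define R2 where "R2 = kernel F2 K2 \<pi>2"
  define D1 where "D1 = schur_den F1 R1"
  define D2 where "D2 = schur_den F2 R2"
  have R1sub: "R1 \<subseteq> carrier F1" and R2sub: "R2 \<subseteq> carrier F2" by (auto simp: R1_def R2_def kernel_def)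
  have D1sg: "subgroup D1 F1" unfolding D1_def schur_den_def by (rule mcomm_subgroup[OF F1 R1sub subset_refl])
  have D2sg: "subgroup D2 F2" unfolding D2_def schur_den_def by (rule mcomm_subgroup[OF F2 R2sub subset_refl])
  have muF: "\<mu> ` carrier F1 \<subseteq> carrier F2" using mla_hom_carrier[OF muhom] by blast
  have muR: "\<mu> ` R1 \<subseteq> R2"
    using R1sub mla_hom_carrier[OF muhom] mueq by (auto simp: R1_def R2_def kernel_def)
  have key: "schur_delta F1 \<pi>1 Gb (\<beta>1 \<circ> fst) (D1 #>\<^bsub>F1\<^esub> x) = (\<theta>1 x, \<theta>2 (\<mu> x))
     \<and> schur_delta F1 \<pi>1 G1 \<beta>1 (D1 #>\<^bsub>F1\<^esub> x) = \<theta>1 x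
     \<and> schur_map F1 \<pi>1 F2 K2 \<pi>2 \<nu> (D1 #>\<^bsub>F1\<^esub> x) = D2 #>\<^bsub>F2\<^esub> \<mu> x
     \<and> D2 #>\<^bsub>F2\<^esub> \<mu> x \<in> schur F2 K2 \<pi>2
     \<and> schur_delta F2 \<pi>2 G2 \<beta>2 (D2 #>\<^bsub>F2\<^esub> \<mu> x) = \<theta>2 (\<mu> x)"
    if x: "x \<in> schur_num F1 R1" for x
  proof -
    have xc: "x \<in> carrier F1" and xr: "\<pi>1 x = \<one>\<^bsub>K1\<^esub>"
      and xm: "x \<in> mcomm F1 (carrier F1) (carrier F1)"
      using x by (auto simp: schur_num_def R1_def kernel_def)
    have muxc: "\<mu> x \<in> carrier F2" using mla_hom_carrier[OF muhom xc] .
    have dA: "schur_delta F1 \<pi>1 Gb (\<beta>1 \<circ> fst) (D1 #>\<^bsub>F1\<^esub> x) = \<theta> x"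
      unfolding D1_def R1_def \<theta>_def
      by (rule delta_coset[OF F1 Gb K1 bGb kerGb pres1(1)])
         (use L xc in \<open>simp_all add: \<theta>_def\<close>)
    have d1: "schur_delta F1 \<pi>1 G1 \<beta>1 (D1 #>\<^bsub>F1\<^esub> x) = \<theta>1 x"
      unfolding D1_def R1_def \<theta>1_def
      by (rule delta_coset[OF F1 G1 K1 b1 ker1 pres1(1)])
         (use L1 xc in \<open>simp_all add: \<theta>1_def\<close>)
    have d2: "schur_delta F2 \<pi>2 G2 \<beta>2 (D2 #>\<^bsub>F2\<^esub> \<mu> x) = \<theta>2 (\<mu> x)"
      unfolding D2_def R2_def \<theta>2_def
      by (rule delta_coset[OF F2 G2 K2 b2 ker2 pres2(1)])
         (use L2 muxc in \<open>simp_all add: \<theta>2_def\<close>)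
    have f1: "(fst \<circ> \<theta>) x = \<theta>1 x"
      by (rule lift_agree[OF F1 G1 mla_hom_comp[OF thhom fsthom] th1hom K1g.group_axioms b1h ker1 _ xm])
         (simp add: theq th1eq)
    have f2: "(snd \<circ> \<theta>) x = (\<theta>2 \<circ> \<mu>) x"
      by (rule lift_agree[OF F1 G2 mla_hom_comp[OF thhom sndhom] mla_hom_comp[OF muhom th2hom] K2g.group_axioms b2h ker2 _ xm])
         (simp add: th2eq mla_hom_carrier[OF muhom] mueq flip: thcomp theq)
    have thx: "\<theta> x = (\<theta>1 x, \<theta>2 (\<mu> x))" using f1 f2 by (simp add: prod_eq_iff)
    have mum: "\<mu> x \<in> mcomm F2 (carrier F2) (carrier F2)"
      by (rule mcomm_map[OF F1 F2 muhom subset_refl subset_refl subset_refl subset_refl muF muF xm])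
    have mur: "\<mu> x \<in> R2" using muxc mueq[OF xc] xr by (simp add: R2_def kernel_def)
    have inS: "D2 #>\<^bsub>F2\<^esub> \<mu> x \<in> schur F2 K2 \<pi>2"
      using mum mur unfolding schur_def schur_num_def D2_def R2_def by blast
    have dM: "schur_map F1 \<pi>1 F2 K2 \<pi>2 \<nu> (D1 #>\<^bsub>F1\<^esub> x) = D2 #>\<^bsub>F2\<^esub> \<mu> x"
      unfolding schur_map_def \<mu>_def[symmetric] D2_def[symmetric] R2_def[symmetric]
    proof (rule the_elem_coset[OF F1g.group_axioms subgroup.subset[OF D1sg] subgroup.one_closed[OF D1sg] xc])
      fix d assume d: "d \<in> D1"
      have dc: "d \<in> carrier F1" using d subgroup.subset[OF D1sg] by blast
      have md: "\<mu> d \<in> D2" unfolding D2_def schur_den_def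
        by (rule mcomm_map[OF F1 F2 muhom R1sub subset_refl R2sub subset_refl muR muF])
           (use d in \<open>simp add: D1_def schur_den_def\<close>)
      have mdc: "\<mu> d \<in> carrier F2" using mla_hom_carrier[OF muhom dc] .
      have "D2 #>\<^bsub>F2\<^esub> \<mu> (d \<otimes>\<^bsub>F1\<^esub> x) = D2 #>\<^bsub>F2\<^esub> (\<mu> d \<otimes>\<^bsub>F2\<^esub> \<mu> x)"
        using muhom dc xc hom_mult[of \<mu> F1 F2 d x] by (simp add: mla_hom_def)
      also have "\<dots> = (D2 #>\<^bsub>F2\<^esub> \<mu> d) #>\<^bsub>F2\<^esub> \<mu> x"
        using F2g.coset_mult_assoc[OF subgroup.subset[OF D2sg] mdc muxc] by simp
      also have "D2 #>\<^bsub>F2\<^esub> \<mu> d = D2"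
        by (rule subgroup.rcos_const[OF D2sg F2g.group_axioms md])
      finally show "D2 #>\<^bsub>F2\<^esub> \<mu> (d \<otimes>\<^bsub>F1\<^esub> x) = D2 #>\<^bsub>F2\<^esub> \<mu> x" .
    qed
    show ?thesis using dA d1 d2 thx dM inS by simp
  qed
  have one: "\<one>\<^bsub>Gb\<^esub> = (\<one>\<^bsub>G1\<^esub>, \<one>\<^bsub>G2\<^esub>)" by (simp add: Gb_def fibre_prod_def)
  show ?thesis unfolding Gb_def[symmetric]
  proof (rule Set.set_eqI)
    fix C
    show "C \<in> delta_kernel F1 K1 \<pi>1 Gb (\<beta>1 \<circ> fst) \<longleftrightarrow>
      C \<in> {C \<in> schur F1 K1 \<pi>1. schur_map F1 \<pi>1 F2 K2 \<pi>2 \<nu> C \<in> delta_kernel F2 K2 \<pi>2 G2 \<beta>2}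
         \<inter> delta_kernel F1 K1 \<pi>1 G1 \<beta>1"
    proof (cases "C \<in> schur F1 K1 \<pi>1")
      case False thus ?thesis by (simp add: delta_kernel_def)
    next
      case True
      then obtain x where x: "x \<in> schur_num F1 R1" "C = D1 #>\<^bsub>F1\<^esub> x"
        unfolding schur_def R1_def D1_def by blast
      show ?thesis using key[OF x(1)] True unfolding x(2)
        by (simp add: delta_kernel_def one D2_def R2_def conj_commute)
    qed
  qed
qed

end
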